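(* Let $d\in\mathbb{N}$, $c=10d+2400$, and let $K$ be a positive real number. Define $b:\mathbb{N}\to(0,\infty)$ by \[ b(s)=\begin{cases}c\sqrt{s}\,\big(sK^{-\frac{1}{d+1}}\big)^{-1} & \text{if } s\ge K^{\frac{1}{d+1}},\\ c\sqrt{s}\,\big(sK^{-\frac{1}{d+1}}\big)^{-0.1} & \text{if } s<K^{\frac{1}{d+1}}.\end{cases} \] Let $g:(0,\infty)\to(0,\infty)$ be given by $g(\lambda)=10e^{-\lambda^2/4}$ if $\lambda\ge2$ and $g(\lambda)=10\log(1+2\lambda^{-1})$ if $0<\lambda<2$. Then \[ \sum_{i=0}^{\infty}\frac{K}{2^{i(d+1)}}\,g\Big(\frac{b(2^i)}{2^{i/2}}\Big)\le1. \]
   Context: $\log$ denotes the natural logarithm. *)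

theory Defs
  imports "HOL-Analysis.Analysis"
begin

definition cconst :: "nat \<Rightarrow> real" where
  "cconst d = 10 * real d + 2400"

definition bfun :: "nat \<Rightarrow> real \<Rightarrow> nat \<Rightarrow> real" where
  "bfun d K s =
     (if real s \<ge> K powr (1 / (real d + 1))
      then cconst d * sqrt (real s) * (real s * K powr (- 1 / (real d + 1))) powr (-1)
      else cconst d * sqrt (real s) * (real s * K powr (- 1 / (real d + 1))) powr (-0.1))"

definition gfun :: "real \<Rightarrow> real" where
  "gfun lam = (if lam \<ge> 2 then 10 * exp (- (lam^2) / 4) else 10 * ln (1 + 2 / lam))"

end

theory Submission imports Defs begin

lemma exp_ge_pow:
  fixes w :: real assumes "0 \<le> w" "n > 0"
  shows "(w / real n) ^ n \<le> exp w"
proof -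
  have "w / real n \<le> exp (w / real n)"
    using exp_ge_add_one_self[of "w / real n"] by linarith
  hence "(w / real n) ^ n \<le> exp (w / real n) ^ n"
    using assms by (intro power_mono) auto
  also have "\<dots> = exp (real n * (w / real n))" by (rule exp_of_nat_mult[symmetric])
  also have "\<dots> = exp w" using assms by simp
  finally show ?thesis .
qed

lemma cconst_ge: "cconst d \<ge> 2400" unfolding cconst_def by simp

lemma lowA:
  fixes x :: real assumes x: "0 < x" "x < 1"
  shows "(1/x)^(d+1) * gfun (cconst d * x powr (-0.1)) \<le> x / 100"
proof -
  define c where "c = cconst d"
  have c: "c \<ge> 2400" using cconst_ge c_def by simp
  define y where "y = x powr (-0.1)"
  have y1: "y \<ge> 1" unfolding y_def using x
    by (simp add: powr_minus_divide powr_le1 )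
  have y10: "y ^ 10 = 1/x" unfolding y_def using x
    by (simp add: powr_power powr_neg_one)
  have lam: "c * y \<ge> 2" using c y1
  proof -
    have "c * 1 \<le> c * y" using c y1 by (intro mult_left_mono) auto
    hence "c \<le> c * y" by (simp only: mult_1_right)
    thus ?thesis using c by linarith
  qed
  hence g: "gfun (c*y) = 10 * exp (- ((c*y)^2) / 4)" unfolding gfun_def by simp
  define n where "n = 5 * (d + 2)"
  have n0: "n > 0" unfolding n_def by simp
  define w where "w = (c*y)^2/4"
  have w0: "w \<ge> 0" unfolding w_def by simp
  have "(w / real n)^n \<le> exp w" using exp_ge_pow[OF w0 n0] .
  moreover have "(w / real n)^n = (c^2/(4 * real n))^n * (y^2)^n"
  proof -
    have "w / real n = (c^2/(4 * real n)) * y^2" unfolding w_def by (simp add: power_mult_distrib)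
    thus ?thesis by (simp only: power_mult_distrib)
  qed
  moreover have "(c^2/(4 * real n)) \<ge> 1000"
  proof -
    have "4 * real n * 1000 \<le> c^2" unfolding n_def c_def cconst_def
      by (simp add: power2_eq_square algebra_simps)
    thus ?thesis using n0 by (simp add: field_simps)
  qed
  note B = this
  have "(c^2/(4 * real n))^1 \<le> (c^2/(4 * real n))^n" 
  proof (rule power_increasing)
    show "1 \<le> n" using n0 by simp
    show "1 \<le> c^2/(4 * real n)" using B by linarith
  qed
  hence "(c^2/(4 * real n))^n \<ge> 1000" using B by simp
  moreover have "(y^2)^n = (1/x)^(d+2)"
  proof -
    have e: "2 * n = 10 * (d+2)" unfolding n_def by simp
    have "(y^2)^n = y^(2*n)" by (simp only: power_mult)
    also have "\<dots> = y^(10*(d+2))" by (simp only: e)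
    also have "\<dots> = (y^10)^(d+2)" by (simp only: power_mult)
    finally have "(y^2)^n = (y^10)^(d+2)" .
    thus ?thesis using y10 by simp
  qed
  ultimately have key: "1000 * (1/x)^(d+2) \<le> exp w"
    using mult_right_mono[of 1000 "(c^2/(4 * real n))^n" "(1/x)^(d+2)"] x by simp
  have "(1/x)^(d+1) * gfun (c * y) = 10 * (1/x)^(d+1) * exp (-w)"
    unfolding g w_def by simp
  also have "\<dots> \<le> x / 100"
  proof -
    have "10 * (1/x)^(d+1) * exp (-w) * exp w = 10 * (1/x)^(d+1)" by (simp add: exp_minus field_simps)
    have "1000 * (1/x)^(d+1) * (1/x) \<le> exp w" using key by (simp add: algebra_simps)
    hence "1000 * (1/x)^(d+1) \<le> x * exp w" using x by (simp add: field_simps)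
    hence "10 * (1/x)^(d+1) \<le> x / 100 * exp w" by simp
    hence "10 * (1/x)^(d+1) * exp (-w) \<le> x / 100 * exp w * exp (-w)" by (rule mult_right_mono) simp
    also have "x / 100 * exp w * exp (-w) = x / 100" by (simp add: exp_minus)
    finally show ?thesis .
  qed
  finally show ?thesis unfolding c_def y_def .
qed

lemma ln_le_2sqrt:
  fixes u :: real assumes "u \<ge> 0" shows "ln (1 + u) \<le> 2 * sqrt u"
proof -
  have s: "sqrt (1+u) > 0" using assms by simp
  have "ln (1+u) = 2 * ln (sqrt (1+u))" using assms by (simp add: ln_sqrt)
  also have "\<dots> \<le> 2 * (sqrt (1+u) - 1)" using ln_le_minus_one[OF s] by simp
  also have "\<dots> \<le> 2 * sqrt u"
  proof -
    have e1: "(sqrt (1+u))^2 = 1 + u" using assms by simp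
    have e2: "(1 + sqrt u)^2 = 1 + u + 2 * sqrt u" using assms by (simp add: power2_sum)
    have "(sqrt (1+u))^2 \<le> (1 + sqrt u)^2" unfolding e1 e2 using assms by simp
    hence "sqrt (1+u) \<le> 1 + sqrt u"
      by (rule power2_le_imp_le) (use assms in simp)
    thus ?thesis by simp
  qed
  finally show ?thesis .
qed

lemma upB:
  fixes x :: real assumes x: "1 \<le> x"
  shows "(1/x)^(d+1) * gfun (cconst d * x powr (-1)) \<le> 0.12 * x powr (-1/4)"
proof -
  define c where "c = cconst d"
  have c: "c \<ge> 2400" using cconst_ge c_def by simp
  define z where "z = x powr (1/4)"
  have z1: "z \<ge> 1" unfolding z_def using x by (simp add: ge_one_powr_ge_zero)
  have z4: "z^4 = x" unfolding z_def using x by (simp add: powr_power)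
  have zinv: "x powr (-1/4) = 1/z" unfolding z_def using x by (simp add: powr_minus_divide)
  have cx: "c * x powr (-1) = c / x" using x by (simp add: powr_neg_one)
  have px: "(1/x)^(d+1) \<le> 1/x"
  proof -
    have "(1/x)^(d+1) \<le> (1/x)^1" using x by (intro power_decreasing) auto
    thus ?thesis by simp
  qed
  have px0: "(1/x)^(d+1) \<ge> 0" using x by simp
  show ?thesis
  proof (cases "c / x \<ge> 2")
    case True
    define w where "w = (c/x)^2/4"
    have w0: "w > 0" unfolding w_def using c x by simp
    have g: "gfun (c/x) = 10 * exp (-w)" unfolding gfun_def w_def using True by simp
    have ew: "exp (-w) \<le> 1/w"
    proof -
      have "w \<le> exp w" using exp_ge_add_one_self[of w] by linarith
      thus ?thesis using w0 by (simp add: exp_minus field_simps)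
    qed
    have xc: "x \<le> c/2" using True x by (simp add: field_simps)
    have zc: "z \<le> 0.006 * c"
    proof (rule ccontr)
      assume "\<not> ?thesis"
      hence "(0.006 * c)^4 < z^4" using c by (intro power_strict_mono) auto
      moreover have "(0.006 * c)^4 \<ge> c/2"
      proof -
        have "c^3 \<ge> 2400^3" using c by (intro power_mono) auto
        hence "0.006^4 * c^3 \<ge> 1/2" by (simp add: power_divide)
        hence "0.006^4 * c^3 * c \<ge> 1/2 * c" using c by (intro mult_right_mono) auto
        moreover have "(0.006 * c)^4 = 0.006^4 * c^3 * c"
          by (simp only: power_mult_distrib power4_eq_xxxx power3_eq_cube mult.assoc)
        ultimately show ?thesis by simp
      qed
      ultimately show False using z4 xc by simp
    qed
    have "(1/x)^(d+1) * gfun (c/x) \<le> (1/x) * (10 * (1/w))"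
      unfolding g using px px0 ew x w0 by (intro mult_mono) auto
    also have "\<dots> = 40 * x / c^2" unfolding w_def using x c by (simp add: field_simps power2_eq_square)
    also have "\<dots> \<le> 0.12 * (1/z)"
    proof -
      have "40 * z^4 * z \<le> 40 * (c/2) * (0.006 * c)" using z4 xc zc z1
        by (intro mult_mono) auto
      hence "40 * x * z \<le> 0.12 * c^2" using z4 by (simp add: power2_eq_square)
      thus ?thesis using z1 c by (simp add: field_simps)
    qed
    finally have "(1/x)^(d+1) * gfun (c/x) \<le> 0.12 * (1/z)" .
    thus ?thesis by (simp only: c_def[symmetric] cx zinv)
  next
    case False
    have g: "gfun (c/x) = 10 * ln (1 + 2 * x / c)" unfolding gfun_def using False c x by simp
    have xc: "x \<ge> c/2" using False x c by (simp add: field_simps)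
    have l: "ln (1 + 2 * x / c) \<le> 2 * sqrt (2 * x / c)" using c x by (intro ln_le_2sqrt) simp
    have sq: "sqrt (2 * x / c) = z^2 * sqrt (2/c)"
    proof -
      have "2 * x / c = (z^2)^2 * (2/c)" using z4 by (simp add: power_mult[symmetric])
      hence "sqrt (2 * x / c) = sqrt ((z^2)^2) * sqrt (2/c)" by (simp only: real_sqrt_mult)
      moreover have "sqrt ((z^2)^2) = z^2" by (simp only: real_sqrt_abs abs_power2)
      ultimately show ?thesis by simp
    qed
    have "(1/x)^(d+1) * gfun (c/x) \<le> (1/x) * (10 * (2 * sqrt (2 * x / c)))"
      unfolding g using px px0 l x c by (intro mult_mono) auto
    also have "\<dots> = 20 * sqrt (2/c) / z^2" unfolding sq unfolding z4[symmetric] using z1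
      by (simp add: field_simps power2_eq_square power4_eq_xxxx)
    also have "\<dots> \<le> 0.12 * (1/z)"
    proof -
      have "(0.0144 * z^2 * c)^2 \<ge> 800^2"
      proof -
        have "(800::real)^2 \<le> 0.0144^2 / 2 * 2400^3" by (simp add: power2_eq_square)
        also have "\<dots> \<le> 0.0144^2 / 2 * c^3"
          using c by (intro mult_left_mono power_mono) auto
        also have "\<dots> = 0.0144^2 * (c/2) * c^2" by (simp add: power3_eq_cube power2_eq_square)
        also have "\<dots> \<le> 0.0144^2 * z^4 * c^2" using z4 xc by (intro mult_right_mono mult_left_mono) auto
        also have "\<dots> = (0.0144 * z^2 * c)^2" by (simp add: power_mult_distrib power4_eq_xxxx power2_eq_square)
        finally show ?thesis .
      qed
      moreover have "0 \<le> 0.0144 * z^2 * c" using c by simp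
      ultimately have a: "0.0144 * z^2 * c \<ge> 800" by (rule power2_le_imp_le)
      have "(20 * sqrt (2/c))^2 = 800 / c" using c by (simp add: power_mult_distrib)
      also have "\<dots> \<le> 0.0144 * z^2" using a c by (simp add: field_simps)
      also have "\<dots> = (0.12 * z)^2" by (simp add: power2_eq_square)
      finally have "(20 * sqrt (2/c))^2 \<le> (0.12 * z)^2" .
      moreover have "0 \<le> 0.12 * z" using z1 by simp
      ultimately have "20 * sqrt (2/c) \<le> 0.12 * z" by (rule power2_le_imp_le)
      hence "20 * sqrt (2/c) / z^2 \<le> 0.12 * z / z^2" using z1 by (intro divide_right_mono) auto
      also have "0.12 * z / z^2 = 0.12 * (1/z)" using z1 by (simp add: power2_eq_square)
      finally show ?thesis .
    qed
    finally have "(1/x)^(d+1) * gfun (c/x) \<le> 0.12 * (1/z)" .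
    thus ?thesis by (simp only: c_def[symmetric] cx zinv)
  qed
qed


definition Gf :: "real \<Rightarrow> real" where
  "Gf x = (if x < 1 then x / 100 else 0.12 * x powr (-1/4))"

lemma Gf_nonneg: "x > 0 \<Longrightarrow> Gf x \<ge> 0" unfolding Gf_def by simp

lemma sum_split_add: "(\<Sum>i<m+n. f i) = (\<Sum>i<m. f i) + (\<Sum>j<n. f (m+j))" for f :: "nat \<Rightarrow> real"
  by (induction n) (simp_all add: add.assoc)

lemma sum_pow2: "(\<Sum>i<m. (2::real)^i) = 2^m - 1"
  by (induction m) simp_all

definition qq :: real where "qq = 2 powr (-1/4)"

lemma qq_bounds: "0 < qq" "qq \<le> 1/1.18"
proof -
  show "0 < qq" unfolding qq_def by simp
  have "(2 powr (1/4::real))^4 = 2" by (simp add: powr_power)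
  have r: "2 powr (1/4::real) \<ge> 1.18"
  proof (rule ccontr)
    assume "\<not> ?thesis"
    hence "(2 powr (1/4::real))^4 < 1.18^4" by (intro power_strict_mono) auto
    thus False using \<open>(2 powr (1/4::real))^4 = 2\<close> by (simp add: power_divide)
  qed
  have "qq = 1 / 2 powr (1/4)" unfolding qq_def by (simp add: powr_minus_divide)
  moreover have "1 / 2 powr (1/4) \<le> 1 / (1.18::real)" using r by (intro divide_left_mono) auto
  ultimately show "qq \<le> 1/1.18" by simp
qed

lemma Gf_shift:
  assumes T: "T > 0" and m: "T \<le> 2^m"
  shows "Gf (2^(m+j) / T) \<le> 0.12 * qq^j"
proof -
  have x1: "2^(m+j) / T \<ge> 2^j" using T m
    by (simp add: power_add field_simps mult_left_mono mult.commute)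
  hence "2^(m+j)/T \<ge> 1" by (meson one_le_power one_le_numeral order_trans)
  hence "Gf (2^(m+j) / T) = 0.12 * (2^(m+j) / T) powr (-1/4)" unfolding Gf_def by simp
  also have "\<dots> \<le> 0.12 * (2^j) powr (-1/4)"
    using x1 by (intro mult_left_mono powr_mono2') auto
  also have "(2^j::real) powr (-1/4) = qq^j" unfolding qq_def
    by (simp add: powr_power powr_realpow[symmetric] powr_powr)
  finally show ?thesis .
qed

lemma sumG:
  assumes T: "T > 0"
  shows "summable (\<lambda>i. Gf (2^i / T))" "\<And>n. (\<Sum>i<n. Gf (2^i / T)) \<le> 0.81"
proof -
  have "\<exists>n. T < (2::real)^n" by (rule real_arch_pow) simp
  hence ex: "\<exists>n. T \<le> (2::real)^n" by (meson less_imp_le)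
  define m where "m = (LEAST n. T \<le> (2::real)^n)"
  have m: "T \<le> 2^m" unfolding m_def by (rule LeastI_ex[OF ex])
  have below: "\<And>i. i < m \<Longrightarrow> 2^i < T" unfolding m_def using not_less_Least by force
  have q: "0 < qq" "qq < 1" using qq_bounds by auto
  have sq: "summable (\<lambda>j. 0.12 * qq^j)" using q by (intro summable_mult summable_geometric) auto
  have "summable (\<lambda>j. Gf (2^(j+m) / T))"
    by (rule summable_comparison_test'[OF sq]) (use Gf_shift[OF T m] Gf_nonneg T in \<open>simp add: add.commute\<close>)
  thus "summable (\<lambda>i. Gf (2^i / T))" using summable_iff_shift[of "\<lambda>i. Gf (2^i/T)" m] by simp
  fix n
  have "(\<Sum>i<n. Gf (2^i / T)) \<le> (\<Sum>i<m+n. Gf (2^i / T))"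
    by (rule sum_mono2) (use Gf_nonneg T in auto)
  also have "\<dots> = (\<Sum>i<m. Gf (2^i / T)) + (\<Sum>j<n. Gf (2^(m+j) / T))" by (rule sum_split_add)
  also have "(\<Sum>i<m. Gf (2^i / T)) \<le> 0.02"
  proof (cases m)
    case 0 thus ?thesis by simp
  next
    case (Suc k)
    have "(\<Sum>i<m. Gf (2^i / T)) = (\<Sum>i<m. 2^i / T / 100)"
      by (rule sum.cong) (use below T in \<open>auto simp: Gf_def\<close>)
    also have "\<dots> = (\<Sum>i<m. 2^i) / (T * 100)" by (simp add: sum_divide_distrib)
    also have "\<dots> = (2^m - 1) / (T * 100)" by (simp only: sum_pow2)
    also have "\<dots> \<le> 0.02"
    proof -
      have "2^k < T" using below Suc by simp
      hence "2^m < 2 * T" using Suc by simp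
      thus ?thesis using T by (simp add: field_simps)
    qed
    finally show ?thesis .
  qed
  also have "(\<Sum>j<n. Gf (2^(m+j) / T)) \<le> (\<Sum>j<n. 0.12 * qq^j)"
    by (rule sum_mono) (rule Gf_shift[OF T m])
  also have "\<dots> = 0.12 * (\<Sum>j<n. qq^j)" by (simp only: sum_distrib_left)
  also have "\<dots> = 0.12 * ((1 - qq^n) / (1 - qq))" using q by (simp only: sum_gp_strict) simp
  also have "\<dots> \<le> 0.12 * (1 / (1 - qq))"
    using q by (intro mult_left_mono divide_right_mono) auto
  also have "\<dots> \<le> 0.79"
  proof -
    have "1 - qq \<ge> 1 - 1/1.18" using qq_bounds by simp
    hence "0.12 \<le> 0.79 * (1 - qq)" by simp
    thus ?thesis using q by (simp add: field_simps)
  qed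
  finally show "(\<Sum>i<n. Gf (2^i / T)) \<le> 0.81" by simp
qed


definition Ff :: "nat \<Rightarrow> real \<Rightarrow> real" where
  "Ff d x = (1/x)^(d+1) * gfun (if 1 \<le> x then cconst d * x powr (-1) else cconst d * x powr (-0.1))"

lemma gfun_nonneg: "lam > 0 \<Longrightarrow> gfun lam \<ge> 0"
  unfolding gfun_def by auto

lemma FG: assumes "x > 0" shows "0 \<le> Ff d x" "Ff d x \<le> Gf x"
proof -
  have "cconst d > 0" using cconst_ge[of d] by simp
  hence "0 < (if 1 \<le> x then cconst d * x powr (-1) else cconst d * x powr (-0.1))"
    using assms by simp
  thus "0 \<le> Ff d x" unfolding Ff_def using assms by (intro mult_nonneg_nonneg gfun_nonneg) auto
  show "Ff d x \<le> Gf x"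
  proof (cases "x < 1")
    case True thus ?thesis unfolding Ff_def Gf_def using lowA[of x d] assms by simp
  next
    case False thus ?thesis unfolding Ff_def Gf_def using upB[of x d] assms by simp
  qed
qed

lemma two_powr_half: "2 powr (real i / 2) = sqrt (2^i)"
proof -
  have "sqrt ((2::real)^i) = (2^i) powr (1/2)" by (simp add: powr_half_sqrt)
  also have "\<dots> = (2 powr (real i)) powr (1/2)" by (simp add: powr_realpow)
  also have "\<dots> = 2 powr (real i / 2)" by (simp add: powr_powr)
  finally show ?thesis by simp
qed

lemma term_eq:
  assumes K: "K > 0" and T: "T = K powr (1/(real d+1))"
  shows "K / 2 ^ (i * (d + 1)) * gfun (bfun d K (2 ^ i) / 2 powr (real i / 2)) = Ff d (2^i / T)"
proof -
  have T0: "T > 0" using T K by simp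
  have KT: "K powr (- 1 / (real d + 1)) = 1/T"
  proof -
    have "- 1 / (real d + 1) = - (1 / (real d + 1))" by simp
    thus ?thesis using T by (simp add: powr_minus_divide)
  qed
  have TK: "T^(d+1) = K"
  proof -
    have "T^(d+1) = T powr (real (d+1))" by (rule powr_realpow[OF T0, symmetric])
    also have "\<dots> = K powr (1/(real d+1) * real (d+1))" using T by (simp add: powr_powr)
    also have "1/(real d+1) * real (d+1) = 1" by simp
    also have "K powr 1 = K" using K by simp
    finally show ?thesis .
  qed
  define x where "x = (2::real)^i / T"
  have x0: "x > 0" unfolding x_def using T0 by simp
  have s: "real ((2::nat)^i) = (2::real)^i" by simp
  have cond: "(real ((2::nat)^i) \<ge> K powr (1 / (real d + 1))) = (1 \<le> x)"
    unfolding s x_def T[symmetric] using T0 by (simp add: field_simps)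
  have rs: "real ((2::nat)^i) * K powr (- 1 / (real d + 1)) = x" unfolding s KT x_def by simp
  have sq: "sqrt ((2::real)^i) > 0" by simp
  have b: "bfun d K (2 ^ i) / 2 powr (real i / 2) =
     (if 1 \<le> x then cconst d * x powr (-1) else cconst d * x powr (-0.1))"
    unfolding bfun_def unfolding cond rs unfolding two_powr_half s using sq by simp
  have k: "K / 2 ^ (i * (d + 1)) = (1/x)^(d+1)"
  proof -
    have "(1/x)^(d+1) = T^(d+1) / (2^i)^(d+1)" unfolding x_def by (simp add: power_divide)
    also have "\<dots> = K / 2 ^ (i * (d + 1))" by (simp only: TK power_mult)
    finally show ?thesis by simp
  qed
  show ?thesis unfolding b k Ff_def x_def ..
qed

theorem lemma3p2:
  fixes d :: nat and K :: real
  assumes "K > 0"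
  shows "summable (\<lambda>i::nat. K / 2 ^ (i * (d + 1)) * gfun (bfun d K (2 ^ i) / 2 powr (real i / 2)))
    \<and> (\<Sum>i. K / 2 ^ (i * (d + 1)) * gfun (bfun d K (2 ^ i) / 2 powr (real i / 2))) \<le> 1"
proof -
  define T where "T = K powr (1/(real d+1))"
  have T0: "T > 0" using assms T_def by simp
  have eq: "(\<lambda>i::nat. K / 2 ^ (i * (d + 1)) * gfun (bfun d K (2 ^ i) / 2 powr (real i / 2)))
      = (\<lambda>i. Ff d (2^i / T))"
    using term_eq[OF assms T_def] by simp
  have pos: "\<And>i. (0::real) < 2^i / T" using T0 by simp
  have sG: "summable (\<lambda>i. Gf (2^i / T))" using sumG(1)[OF T0] .
  have sF: "summable (\<lambda>i. Ff d (2^i / T))"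
    by (rule summable_comparison_test'[OF sG]) (use FG[OF pos] in simp)
  have "(\<Sum>i. Ff d (2^i / T)) \<le> (\<Sum>i. Gf (2^i / T))"
    by (rule suminf_le) (use FG[OF pos] sF sG in auto)
  also have "\<dots> \<le> 0.81" by (rule suminf_le_const[OF sG sumG(2)[OF T0]])
  finally show ?thesis unfolding eq using sF by simp
qed

end
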